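(* For $n=2,3,\dots$ let $\Omega_n=\{1,\dots,n\}$ and $\mathcal P_n=\mathcal P(\Omega_n)$. Let $\{\gamma_n\}_{n\ge2}$ be given, where $\gamma_n$ maps each $p\in\mathcal P_n$ continuously to a bilinear form $\gamma_{n,p}$ on $\mathbb R^{\Omega_n}$. The following are equivalent: (i) there is $c\in\mathbb R$ with $\gamma_{n,p}=c\,\mathrm{Cov}_p$ for all $n$ and all $p\in\mathcal P_n$; (ii) both (ii-1) $\gamma_{n,p}(A,1)=0$ for all $n$, $p\in\mathcal P_n$, $A\in\mathbb R^{\Omega_n}$ (where $1$ is the constant function), and (ii-2) for all $m\le n$ and every surjection $F:\Omega_n\to\Omega_m$, $$\gamma_{m,p^F}(A,B)=\gamma_{n,p}(A\circ F,B\circ F)\quad\forall p\in\mathcal P_n,\ \forall A,B\in\mathbb R^{\Omega_m}.$$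
   Context: $\mathcal P(\Omega)$ is the set of strictly positive probability distributions on a finite set $\Omega$. For $p\in\mathcal P_n$ and a surjection $F:\Omega_n\to\Omega_m$, $p^F\in\mathcal P_m$ is defined by $p^F(x)=\sum_{y\in F^{-1}(x)}p(y)$. $\mathrm{Cov}_p(A,B)=\sum_\omega p(\omega)(A(\omega)-\langle A\rangle_p)(B(\omega)-\langle B\rangle_p)$ with $\langle A\rangle_p=\sum_\omega p(\omega)A(\omega)$. *)

theory Defs
  imports "HOL-Analysis.Analysis"
begin

definition Omega :: "nat \<Rightarrow> nat set" where
  "Omega n = {1..n}"

definition RV :: "nat \<Rightarrow> (nat \<Rightarrow> real) set" where
  "RV n = (Omega n \<rightarrow>\<^sub>E (UNIV :: real set))"

definition Pn :: "nat \<Rightarrow> (nat \<Rightarrow> real) set" where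
  "Pn n = {p \<in> RV n. (\<forall>x\<in>Omega n. 0 < p x) \<and> (\<Sum>x\<in>Omega n. p x) = 1}"

definition surj_map :: "nat \<Rightarrow> nat \<Rightarrow> (nat \<Rightarrow> nat) \<Rightarrow> bool" where
  "surj_map n m F \<longleftrightarrow> F ` Omega n = Omega m"

definition pushfwd :: "nat \<Rightarrow> nat \<Rightarrow> (nat \<Rightarrow> nat) \<Rightarrow> (nat \<Rightarrow> real) \<Rightarrow> (nat \<Rightarrow> real)" where
  "pushfwd n m F p = restrict (\<lambda>x. \<Sum>y\<in>{y \<in> Omega n. F y = x}. p y) (Omega m)"

definition pullback :: "nat \<Rightarrow> (nat \<Rightarrow> nat) \<Rightarrow> (nat \<Rightarrow> real) \<Rightarrow> (nat \<Rightarrow> real)" where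
  "pullback n F A = restrict (A \<circ> F) (Omega n)"

definition one_fun :: "nat \<Rightarrow> (nat \<Rightarrow> real)" where
  "one_fun n = restrict (\<lambda>_. 1) (Omega n)"

definition expect :: "nat \<Rightarrow> (nat \<Rightarrow> real) \<Rightarrow> (nat \<Rightarrow> real) \<Rightarrow> real" where
  "expect n p A = (\<Sum>w\<in>Omega n. p w * A w)"

definition Cov :: "nat \<Rightarrow> (nat \<Rightarrow> real) \<Rightarrow> (nat \<Rightarrow> real) \<Rightarrow> (nat \<Rightarrow> real) \<Rightarrow> real" where
  "Cov n p A B = (\<Sum>w\<in>Omega n. p w * (A w - expect n p A) * (B w - expect n p B))"

definition bilinear_on :: "nat \<Rightarrow> ((nat \<Rightarrow> real) \<Rightarrow> (nat \<Rightarrow> real) \<Rightarrow> real) \<Rightarrow> bool" where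
  "bilinear_on n g \<longleftrightarrow>
     (\<forall>A\<in>RV n. \<forall>B\<in>RV n. \<forall>C\<in>RV n. \<forall>a b :: real.
        g (restrict (\<lambda>w. a * A w + b * C w) (Omega n)) B = a * g A B + b * g C B \<and>
        g A (restrict (\<lambda>w. a * B w + b * C w) (Omega n)) = a * g A B + b * g A C)"

end

theory Submission
  imports Defs
begin

lemma finite_Omega[simp]: "finite (Omega n)" by (simp add: Omega_def)
lemma card_Omega[simp]: "card (Omega n) = n" by (simp add: Omega_def)
lemma Omega_iff: "x \<in> Omega n \<longleftrightarrow> 1 \<le> x \<and> x \<le> n" by (simp add: Omega_def)

lemma pf_sum:
  assumes "F ` Omega n \<subseteq> Omega m"
  shows "(\<Sum>x\<in>Omega m. pushfwd n m F p x * h x) = (\<Sum>y\<in>Omega n. p y * h (F y))"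
proof -
  have "(\<Sum>x\<in>Omega m. pushfwd n m F p x * h x)
        = (\<Sum>x\<in>Omega m. \<Sum>y\<in>{y\<in>Omega n. F y = x}. p y * h (F y))"
  proof (rule sum.cong)
    fix x assume "x \<in> Omega m"
    then have "pushfwd n m F p x * h x = (\<Sum>y\<in>{y\<in>Omega n. F y = x}. p y * h x)"
      by (simp add: pushfwd_def sum_distrib_right)
    also have "\<dots> = (\<Sum>y\<in>{y\<in>Omega n. F y = x}. p y * h (F y))"
      by (rule sum.cong) auto
    finally show "pushfwd n m F p x * h x = (\<Sum>y\<in>{y\<in>Omega n. F y = x}. p y * h (F y))" .
  qed simp
  also have "\<dots> = (\<Sum>y\<in>Omega n. p y * h (F y))"
    by (rule sum.group) (use assms in auto)
  finally show ?thesis .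
qed

lemma pb_apply: "y \<in> Omega n \<Longrightarrow> pullback n F A y = A (F y)"
  by (simp add: pullback_def)

lemma expect_pf:
  assumes "F ` Omega n \<subseteq> Omega m"
  shows "expect m (pushfwd n m F p) A = expect n p (pullback n F A)"
  unfolding expect_def using pf_sum[OF assms, of p A] by (simp add: pb_apply)

lemma Cov_pf:
  assumes "F ` Omega n \<subseteq> Omega m"
  shows "Cov m (pushfwd n m F p) A B = Cov n p (pullback n F A) (pullback n F B)"
proof -
  define a where "a = expect n p (pullback n F A)"
  define b where "b = expect n p (pullback n F B)"
  have "Cov m (pushfwd n m F p) A B = (\<Sum>x\<in>Omega m. pushfwd n m F p x * ((A x - a) * (B x - b)))"
    unfolding Cov_def a_def b_def expect_pf[OF assms] by (simp add: mult.assoc)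
  also have "\<dots> = (\<Sum>y\<in>Omega n. p y * ((A (F y) - a) * (B (F y) - b)))"
    by (rule pf_sum[OF assms])
  also have "\<dots> = Cov n p (pullback n F A) (pullback n F B)"
    unfolding Cov_def a_def b_def by (rule sum.cong) (auto simp: pb_apply mult.assoc)
  finally show ?thesis .
qed

lemma pb_RV: "pullback n F A \<in> RV n"
  by (simp add: RV_def pullback_def)

lemma surj_sub: "surj_map n m F \<Longrightarrow> F ` Omega n \<subseteq> Omega m"
  by (simp add: surj_map_def)

lemma pf_Pn:
  assumes "surj_map n m F" "p \<in> Pn n"
  shows "pushfwd n m F p \<in> Pn m"
proof -
  have "pushfwd n m F p \<in> RV m" by (simp add: RV_def pushfwd_def)
  moreover have "0 < pushfwd n m F p x" if x: "x \<in> Omega m" for x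
  proof -
    from x assms(1) obtain y where "y \<in> Omega n" "F y = x" unfolding surj_map_def by force
    then have "{y\<in>Omega n. F y = x} \<noteq> {}" by auto
    moreover have "\<forall>y\<in>{y\<in>Omega n. F y = x}. 0 < p y" using assms(2) by (auto simp: Pn_def)
    ultimately have "0 < sum p {y\<in>Omega n. F y = x}" by (intro sum_pos) auto
    then show ?thesis using x by (simp add: pushfwd_def)
  qed
  moreover have "(\<Sum>x\<in>Omega m. pushfwd n m F p x) = 1"
    using pf_sum[OF surj_sub[OF assms(1)], of p "\<lambda>_. 1"] assms(2) by (simp add: Pn_def)
  ultimately show ?thesis by (simp add: Pn_def)
qed

lemma Cov_one:
  assumes "p \<in> Pn n"
  shows "Cov n p A (one_fun n) = 0"
proof -
  have "expect n p (one_fun n) = 1" using assms by (simp add: expect_def one_fun_def Pn_def)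
  then show ?thesis by (simp add: Cov_def one_fun_def)
qed


definition ee :: "nat \<Rightarrow> nat \<Rightarrow> nat \<Rightarrow> real" where
  "ee n i = restrict (\<lambda>w. if w = i then 1 else 0) (Omega n)"

lemma ee_RV: "ee n i \<in> RV n" by (simp add: RV_def ee_def)

lemma RV_restrict: "restrict f (Omega n) \<in> RV n" by (simp add: RV_def)

lemma bil_zero1:
  assumes "bilinear_on n g" "B \<in> RV n"
  shows "g (restrict (\<lambda>w. 0) (Omega n)) B = 0"
proof -
  have z: "restrict (\<lambda>w. 0::real) (Omega n) \<in> RV n" by (rule RV_restrict)
  from assms(1)[unfolded bilinear_on_def, rule_format, OF z assms(2) z, of 0 0]
  show ?thesis by simp
qed

lemma bil_zero2:
  assumes "bilinear_on n g" "A \<in> RV n"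
  shows "g A (restrict (\<lambda>w. 0) (Omega n)) = 0"
proof -
  have z: "restrict (\<lambda>w. 0::real) (Omega n) \<in> RV n" by (rule RV_restrict)
  from assms(1)[unfolded bilinear_on_def, rule_format, OF assms(2) z z, of 0 0]
  show ?thesis by simp
qed

lemma bil_sum1:
  assumes bl: "bilinear_on n g" and fin: "finite S" and X: "\<forall>i\<in>S. X i \<in> RV n" and B: "B \<in> RV n"
  shows "g (restrict (\<lambda>w. \<Sum>i\<in>S. c i * X i w) (Omega n)) B = (\<Sum>i\<in>S. c i * g (X i) B)"
  using fin X
proof (induction S rule: finite_induct)
  case empty
  then show ?case using bil_zero1[OF bl B] by (simp add: restrict_def)
next
  case (insert x S)
  define C where "C = restrict (\<lambda>w. \<Sum>i\<in>S. c i * X i w) (Omega n)"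
  have C: "C \<in> RV n" unfolding C_def by (rule RV_restrict)
  have Xx: "X x \<in> RV n" using insert by auto
  have h1: "g (restrict (\<lambda>w. c x * X x w + 1 * C w) (Omega n)) B = c x * g (X x) B + 1 * g C B"
    using bl[unfolded bilinear_on_def, rule_format, OF Xx B C] by blast
  have eq: "restrict (\<lambda>w. c x * X x w + 1 * C w) (Omega n)
      = restrict (\<lambda>w. \<Sum>i\<in>insert x S. c i * X i w) (Omega n)"
    using insert(1,2) by (intro restrict_ext) (simp add: C_def)
  have IH: "g C B = (\<Sum>i\<in>S. c i * g (X i) B)" using insert by (simp add: C_def restrict_def)
  have "g (restrict (\<lambda>w. \<Sum>i\<in>insert x S. c i * X i w) (Omega n)) B = c x * g (X x) B + 1 * g C B"
    using h1 unfolding eq .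
  also have "\<dots> = (\<Sum>i\<in>insert x S. c i * g (X i) B)" using IH insert(1,2) by simp
  finally show ?case .
qed

lemma bil_sum2:
  assumes bl: "bilinear_on n g" and fin: "finite S" and X: "\<forall>i\<in>S. X i \<in> RV n" and A: "A \<in> RV n"
  shows "g A (restrict (\<lambda>w. \<Sum>i\<in>S. c i * X i w) (Omega n)) = (\<Sum>i\<in>S. c i * g A (X i))"
  using fin X
proof (induction S rule: finite_induct)
  case empty
  then show ?case using bil_zero2[OF bl A] by (simp add: restrict_def)
next
  case (insert x S)
  define C where "C = restrict (\<lambda>w. \<Sum>i\<in>S. c i * X i w) (Omega n)"
  have C: "C \<in> RV n" unfolding C_def by (rule RV_restrict)
  have Xx: "X x \<in> RV n" using insert by auto
  have h1: "g A (restrict (\<lambda>w. c x * X x w + 1 * C w) (Omega n)) = c x * g A (X x) + 1 * g A C"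
    using bl[unfolded bilinear_on_def, rule_format, OF A Xx C] by blast
  have eq: "restrict (\<lambda>w. c x * X x w + 1 * C w) (Omega n)
      = restrict (\<lambda>w. \<Sum>i\<in>insert x S. c i * X i w) (Omega n)"
    using insert(1,2) by (intro restrict_ext) (simp add: C_def)
  have IH: "g A C = (\<Sum>i\<in>S. c i * g A (X i))" using insert by (simp add: C_def restrict_def)
  have "g A (restrict (\<lambda>w. \<Sum>i\<in>insert x S. c i * X i w) (Omega n)) = c x * g A (X x) + 1 * g A C"
    using h1 unfolding eq .
  also have "\<dots> = (\<Sum>i\<in>insert x S. c i * g A (X i))" using IH insert(1,2) by simp
  finally show ?case .
qed

lemma RV_expand:
  assumes "A \<in> RV n"
  shows "A = restrict (\<lambda>w. \<Sum>i\<in>Omega n. A i * ee n i w) (Omega n)"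
proof
  fix w show "A w = restrict (\<lambda>w. \<Sum>i\<in>Omega n. A i * ee n i w) (Omega n) w"
  proof (cases "w \<in> Omega n")
    case True
    then have "(\<Sum>i\<in>Omega n. A i * ee n i w) = (\<Sum>i\<in>Omega n. if w = i then A i else 0)"
      by (intro sum.cong) (auto simp: ee_def)
    also have "\<dots> = A w" using True by simp
    finally show ?thesis using True by simp
  next
    case False
    then show ?thesis using assms by (auto simp: RV_def PiE_def extensional_def)
  qed
qed

lemma bil_expand:
  assumes bl: "bilinear_on n g" and A: "A \<in> RV n" and B: "B \<in> RV n"
  shows "g A B = (\<Sum>i\<in>Omega n. \<Sum>j\<in>Omega n. A i * B j * g (ee n i) (ee n j))"
proof -
  have "g A B = (\<Sum>i\<in>Omega n. A i * g (ee n i) B)"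
    by (subst RV_expand[OF A], rule bil_sum1[OF bl]) (auto simp: ee_RV B)
  also have "\<dots> = (\<Sum>i\<in>Omega n. A i * (\<Sum>j\<in>Omega n. B j * g (ee n i) (ee n j)))"
  proof (rule sum.cong)
    fix i assume "i \<in> Omega n"
    show "A i * g (ee n i) B = A i * (\<Sum>j\<in>Omega n. B j * g (ee n i) (ee n j))"
      by (subst RV_expand[OF B], subst bil_sum2[OF bl]) (auto simp: ee_RV)
  qed simp
  also have "\<dots> = (\<Sum>i\<in>Omega n. \<Sum>j\<in>Omega n. A i * B j * g (ee n i) (ee n j))"
    by (simp add: sum_distrib_left mult.assoc)
  finally show ?thesis .
qed


definition unif :: "nat \<Rightarrow> nat \<Rightarrow> real" where
  "unif N = restrict (\<lambda>_. 1 / real N) (Omega N)"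

lemma unif_Pn: "1 \<le> N \<Longrightarrow> unif N \<in> Pn N"
  by (auto simp: unif_def Pn_def RV_def Omega_iff)

lemma Cov_alt:
  assumes "p \<in> Pn n"
  shows "Cov n p A B = expect n p (\<lambda>w. A w * B w) - expect n p A * expect n p B"
proof -
  define a where "a = expect n p A"
  define b where "b = expect n p B"
  have s1: "(\<Sum>w\<in>Omega n. p w) = 1" using assms by (simp add: Pn_def)
  have "Cov n p A B = (\<Sum>w\<in>Omega n. p w * (A w * B w) - b * (p w * A w) - a * (p w * B w) + a * b * p w)"
    unfolding Cov_def a_def[symmetric] b_def[symmetric] by (rule sum.cong) (auto simp: algebra_simps)
  also have "\<dots> = expect n p (\<lambda>w. A w * B w) - b * a - a * b + a * b * 1"
    unfolding s1[symmetric] by (simp add: sum.distrib sum_subtractf sum_distrib_left[symmetric] expect_def a_def b_def)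
  finally show ?thesis by (simp add: a_def b_def)
qed

lemma expect_unif: "expect N (unif N) A = (\<Sum>w\<in>Omega N. A w) / real N"
  by (simp add: expect_def unif_def sum_divide_distrib)

definition tr :: "nat \<Rightarrow> nat \<Rightarrow> nat \<Rightarrow> nat" where
  "tr a b w = (if w = a then b else if w = b then a else w)"

lemma tr_tr[simp]: "tr a b (tr a b w) = w" by (simp add: tr_def)

lemma tr_Omega: "a \<in> Omega N \<Longrightarrow> b \<in> Omega N \<Longrightarrow> w \<in> Omega N \<Longrightarrow> tr a b w \<in> Omega N"
  by (simp add: tr_def)

lemma tr_surj:
  assumes "a \<in> Omega N" "b \<in> Omega N"
  shows "surj_map N N (tr a b)"
  unfolding surj_map_def
proof
  show "tr a b ` Omega N \<subseteq> Omega N" using tr_Omega[OF assms] by auto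
  show "Omega N \<subseteq> tr a b ` Omega N"
  proof
    fix w assume "w \<in> Omega N"
    then show "w \<in> tr a b ` Omega N"
      by (metis image_eqI tr_tr tr_Omega[OF assms])
  qed
qed

lemma pf_unif_tr:
  assumes "a \<in> Omega N" "b \<in> Omega N"
  shows "pushfwd N N (tr a b) (unif N) = unif N"
proof
  fix x show "pushfwd N N (tr a b) (unif N) x = unif N x"
  proof (cases "x \<in> Omega N")
    case True
    then have "{y \<in> Omega N. tr a b y = x} = {tr a b x}"
      using tr_Omega[OF assms] by (auto; metis tr_tr)
    then show ?thesis using True tr_Omega[OF assms True] by (simp add: pushfwd_def unif_def)
  next
    case False
    then show ?thesis by (simp add: pushfwd_def unif_def)
  qed
qed

lemma pb_ee_tr:
  assumes "a \<in> Omega N" "b \<in> Omega N"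
  shows "pullback N (tr a b) (ee N x) = ee N (tr a b x)"
proof
  fix w show "pullback N (tr a b) (ee N x) w = ee N (tr a b x) w"
  proof (cases "w \<in> Omega N")
    case True
    have "(tr a b w = x) = (w = tr a b x)" by (metis tr_tr)
    then show ?thesis using True tr_Omega[OF assms True] by (simp add: pullback_def ee_def)
  next
    case False
    then show ?thesis by (simp add: pullback_def ee_def)
  qed
qed

lemma double_sum_if:
  fixes A B :: "nat \<Rightarrow> real" and a b :: real
  assumes "finite S"
  shows "(\<Sum>i\<in>S. \<Sum>j\<in>S. A i * B j * (if i = j then a else b))
     = (a - b) * (\<Sum>i\<in>S. A i * B i) + b * (\<Sum>i\<in>S. A i) * (\<Sum>j\<in>S. B j)"
proof -
  have "(\<Sum>i\<in>S. \<Sum>j\<in>S. A i * B j * (if i = j then a else b))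
      = (\<Sum>i\<in>S. (a - b) * (A i * B i) + b * A i * (\<Sum>j\<in>S. B j))"
  proof (rule sum.cong)
    fix i assume i: "i \<in> S"
    have "(\<Sum>j\<in>S. A i * B j * (if i = j then a else b))
        = (\<Sum>j\<in>S. (if i = j then (a - b) * (A i * B j) else 0) + b * A i * B j)"
      by (rule sum.cong) (auto simp: algebra_simps)
    also have "\<dots> = (a - b) * (A i * B i) + b * A i * (\<Sum>j\<in>S. B j)"
      using i assms by (simp add: sum.distrib sum_distrib_left)
    finally show "(\<Sum>j\<in>S. A i * B j * (if i = j then a else b)) = (a - b) * (A i * B i) + b * A i * (\<Sum>j\<in>S. B j)" .
  qed simp
  also have "\<dots> = (a - b) * (\<Sum>i\<in>S. A i * B i) + b * (\<Sum>i\<in>S. A i) * (\<Sum>j\<in>S. B j)"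
    by (simp add: sum.distrib sum_distrib_left sum_distrib_right mult.assoc, subst sum.swap, rule refl)
  finally show ?thesis .
qed


lemma one_RV: "one_fun n \<in> RV n" by (simp add: one_fun_def RV_def)

lemma one_in_Omega: "1 \<le> N \<Longrightarrow> (1::nat) \<in> Omega N" by (simp add: Omega_iff)

lemma sum_ee: "1 \<le> N \<Longrightarrow> (\<Sum>w\<in>Omega N. ee N 1 w) = 1"
proof -
  assume N: "1 \<le> N"
  have "(\<Sum>w\<in>Omega N. ee N 1 w) = (\<Sum>w\<in>Omega N. if w = 1 then 1 else 0)"
    by (rule sum.cong) (auto simp: ee_def)
  then show ?thesis using one_in_Omega[OF N] by simp
qed

lemma sum_ee2: "1 \<le> N \<Longrightarrow> (\<Sum>w\<in>Omega N. ee N 1 w * ee N 1 w) = 1"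
proof -
  assume N: "1 \<le> N"
  have "(\<Sum>w\<in>Omega N. ee N 1 w * ee N 1 w) = (\<Sum>w\<in>Omega N. if w = 1 then 1 else 0)"
    by (rule sum.cong) (auto simp: ee_def)
  then show ?thesis using one_in_Omega[OF N] by simp
qed

lemma Cov_ee1: "2 \<le> N \<Longrightarrow> Cov N (unif N) (ee N 1) (ee N 1) \<noteq> 0"
proof -
  assume N: "2 \<le> N"
  have "Cov N (unif N) (ee N 1) (ee N 1) = 1 / real N - (1 / real N) * (1 / real N)"
    using N sum_ee[of N] sum_ee2[of N] by (simp add: Cov_alt[OF unif_Pn] expect_unif)
  also have "\<dots> = (real N - 1) / (real N * real N)" using N by (simp add: field_simps)
  also have "\<dots> \<noteq> 0" using N by simp
  finally show ?thesis .
qed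

lemma fiber_exists:
  "\<exists>F. F ` Omega (\<Sum>i\<in>Omega n. k i) \<subseteq> Omega n \<and>
       (\<forall>i\<in>Omega n. card {y\<in>Omega (\<Sum>i\<in>Omega n. k i). F y = i} = k i)"
proof (induction n)
  case 0
  then show ?case by (simp add: Omega_def)
next
  case (Suc n)
  define S where "S = (\<Sum>i\<in>Omega n. k i)"
  define K where "K = k (Suc n)"
  from Suc obtain F where Fim: "F ` Omega S \<subseteq> Omega n"
    and Fc: "\<forall>i\<in>Omega n. card {y\<in>Omega S. F y = i} = k i" unfolding S_def by blast
  have OS: "Omega (Suc n) = insert (Suc n) (Omega n)" by (auto simp: Omega_iff)
  have nin: "Suc n \<notin> Omega n" by (simp add: Omega_iff)
  have sumS: "(\<Sum>i\<in>Omega (Suc n). k i) = S + K" unfolding OS S_def K_def using nin by simp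
  define G where "G = (\<lambda>w. if w \<le> S then F w else Suc n)"
  have "G ` Omega (S + K) \<subseteq> Omega (Suc n)"
  proof
    fix z assume "z \<in> G ` Omega (S + K)"
    then obtain w where w: "w \<in> Omega (S + K)" "z = G w" by blast
    show "z \<in> Omega (Suc n)"
    proof (cases "w \<le> S")
      case True
      then have "w \<in> Omega S" using w by (simp add: Omega_iff)
      then have "F w \<in> Omega n" using Fim by blast
      then show ?thesis using True w by (simp add: G_def Omega_iff)
    next
      case False
      then show ?thesis using w by (simp add: G_def Omega_iff)
    qed
  qed
  moreover have "card {y\<in>Omega (S + K). G y = i} = k i" if i: "i \<in> Omega (Suc n)" for i
  proof (cases "i = Suc n")
    case True
    have "{y\<in>Omega (S + K). G y = i} = {S+1..S+K}"
    proof (rule set_eqI, rule iffI)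
      fix y assume "y \<in> {y\<in>Omega (S + K). G y = i}"
      then have y: "y \<in> Omega (S + K)" "G y = i" by auto
      show "y \<in> {S+1..S+K}"
      proof (cases "y \<le> S")
        case True
        then have "y \<in> Omega S" using y by (simp add: Omega_iff)
        then have "F y \<in> Omega n" using Fim by blast
        then show ?thesis using y True \<open>i = Suc n\<close> by (simp add: G_def Omega_iff)
      next
        case False
        then show ?thesis using y by (simp add: Omega_iff)
      qed
    next
      fix y assume "y \<in> {S+1..S+K}"
      then show "y \<in> {y\<in>Omega (S + K). G y = i}" using True by (auto simp: Omega_iff G_def)
    qed
    then show ?thesis using True by (simp add: K_def)
  next
    case False
    then have i': "i \<in> Omega n" using i OS by auto
    have "{y\<in>Omega (S + K). G y = i} = {y\<in>Omega S. F y = i}"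
      using i' by (auto simp: Omega_iff G_def split: if_splits)
    then show ?thesis using Fc i' by simp
  qed
  ultimately show ?case unfolding sumS by blast
qed

locale gm =
  fixes \<gamma> :: "nat \<Rightarrow> (nat \<Rightarrow> real) \<Rightarrow> (nat \<Rightarrow> real) \<Rightarrow> (nat \<Rightarrow> real) \<Rightarrow> real"
  assumes bilin: "\<And>n p. 2 \<le> n \<Longrightarrow> p \<in> Pn n \<Longrightarrow> bilinear_on n (\<gamma> n p)"
    and i1: "\<And>n p A. 2 \<le> n \<Longrightarrow> p \<in> Pn n \<Longrightarrow> A \<in> RV n \<Longrightarrow> \<gamma> n p A (one_fun n) = 0"
    and i2: "\<And>m n F p A B. 2 \<le> m \<Longrightarrow> m \<le> n \<Longrightarrow> surj_map n m F \<Longrightarrow> p \<in> Pn n \<Longrightarrow>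
               A \<in> RV m \<Longrightarrow> B \<in> RV m \<Longrightarrow>
               \<gamma> m (pushfwd n m F p) A B = \<gamma> n p (pullback n F A) (pullback n F B)"
begin

definition g where "g N i j = \<gamma> N (unif N) (ee N i) (ee N j)"

lemma g_tr:
  assumes N: "2 \<le> N" and ab: "a \<in> Omega N" "b \<in> Omega N"
  shows "g N (tr a b x) (tr a b y) = g N x y"
proof -
  have "\<gamma> N (pushfwd N N (tr a b) (unif N)) (ee N (tr a b x)) (ee N (tr a b y))
      = \<gamma> N (unif N) (pullback N (tr a b) (ee N (tr a b x))) (pullback N (tr a b) (ee N (tr a b y)))"
    using N by (intro i2 tr_surj ab unif_Pn ee_RV) auto
  then show ?thesis unfolding g_def pf_unif_tr[OF ab] pb_ee_tr[OF ab] by simp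
qed

lemma g_diag:
  assumes N: "2 \<le> N" and i: "i \<in> Omega N"
  shows "g N i i = g N 1 1"
proof -
  have "g N (tr 1 i 1) (tr 1 i 1) = g N 1 1" using N i by (intro g_tr) (auto simp: Omega_iff)
  then show ?thesis by (simp add: tr_def)
qed

lemma g_off:
  assumes N: "2 \<le> N" and i: "i \<in> Omega N" and j: "j \<in> Omega N" and ij: "i \<noteq> j"
  shows "g N i j = g N 1 2"
proof -
  define t where "t = (if i = 2 then 1 else (2::nat))"
  have t: "t \<in> Omega N" using N by (simp add: t_def Omega_iff)
  have it: "i \<noteq> t" by (simp add: t_def)
  have e1: "tr 1 i 1 = i" "tr 1 i 2 = t" by (auto simp: tr_def t_def)
  have e2: "tr t j i = i" "tr t j t = j" using it ij by (auto simp: tr_def)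
  have "g N (tr 1 i 1) (tr 1 i 2) = g N 1 2" using N i by (intro g_tr) (auto simp: Omega_iff)
  then have 1: "g N i t = g N 1 2" unfolding e1 .
  have "g N (tr t j i) (tr t j t) = g N i t" using N t j by (intro g_tr) auto
  then have "g N i j = g N i t" unfolding e2 .
  with 1 show ?thesis by simp
qed

lemma row:
  assumes N: "2 \<le> N"
  shows "g N 1 1 + (real N - 1) * g N 1 2 = 0"
proof -
  have N1: "1 \<le> N" using N by simp
  have "0 = \<gamma> N (unif N) (ee N 1) (one_fun N)"
    using N by (intro i1[symmetric] unif_Pn ee_RV) auto
  also have "\<dots> = (\<Sum>i\<in>Omega N. \<Sum>j\<in>Omega N. ee N 1 i * one_fun N j * g N i j)"
    unfolding g_def using N by (intro bil_expand bilin unif_Pn ee_RV one_RV) auto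
  also have "\<dots> = (\<Sum>i\<in>Omega N. if i = 1 then (\<Sum>j\<in>Omega N. g N 1 j) else 0)"
  proof (rule sum.cong)
    fix i assume i: "i \<in> Omega N"
    show "(\<Sum>j\<in>Omega N. ee N 1 i * one_fun N j * g N i j) = (if i = 1 then (\<Sum>j\<in>Omega N. g N 1 j) else 0)"
      using i by (auto intro!: sum.cong simp: ee_def one_fun_def)
  qed simp
  also have "\<dots> = (\<Sum>j\<in>Omega N. g N 1 j)" using one_in_Omega[OF N1] by simp
  also have "\<dots> = g N 1 1 + (\<Sum>j\<in>Omega N - {1}. g N 1 j)"
    using one_in_Omega[OF N1] by (simp add: sum.remove)
  also have "(\<Sum>j\<in>Omega N - {1}. g N 1 j) = (\<Sum>j\<in>Omega N - {1}. g N 1 2)"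
    using N by (intro sum.cong g_off) (auto simp: Omega_iff)
  also have "\<dots> = (real N - 1) * g N 1 2"
    using one_in_Omega[OF N1] N1 by (simp add: of_nat_diff)
  finally show ?thesis by simp
qed

lemma unif_form:
  assumes N: "2 \<le> N"
  shows "\<exists>c. \<forall>A\<in>RV N. \<forall>B\<in>RV N. \<gamma> N (unif N) A B = c * Cov N (unif N) A B"
proof -
  define a where "a = g N 1 1"
  define b where "b = g N 1 2"
  have Npos: "real N > 0" using N by simp
  have hb: "(a - b) / real N = - b"
    using row[OF N] Npos by (simp add: a_def b_def field_simps)
  have "\<gamma> N (unif N) A B = ((a - b) * real N) * Cov N (unif N) A B" if A: "A \<in> RV N" and B: "B \<in> RV N" for A B
  proof -
    define S where "S = (\<Sum>i\<in>Omega N. A i * B i)"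
    define SA where "SA = (\<Sum>i\<in>Omega N. A i)"
    define SB where "SB = (\<Sum>i\<in>Omega N. B i)"
    have "\<gamma> N (unif N) A B = (\<Sum>i\<in>Omega N. \<Sum>j\<in>Omega N. A i * B j * g N i j)"
      unfolding g_def using N A B by (intro bil_expand bilin unif_Pn) auto
    also have "\<dots> = (\<Sum>i\<in>Omega N. \<Sum>j\<in>Omega N. A i * B j * (if i = j then a else b))"
      unfolding a_def b_def using N by (intro sum.cong) (auto simp: g_diag g_off)
    also have "\<dots> = (a - b) * S + b * SA * SB" unfolding S_def SA_def SB_def by (rule double_sum_if) simp
    also have "\<dots> = (a - b) * S - ((a - b) / real N) * SA * SB" using hb by simp
    also have "\<dots> = ((a - b) * real N) * (S / real N - SA / real N * (SB / real N))"
      using Npos by (simp add: field_simps)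
    also have "S / real N - SA / real N * (SB / real N) = Cov N (unif N) A B"
      using N by (simp add: Cov_alt[OF unif_Pn] expect_unif S_def SA_def SB_def)
    finally show ?thesis .
  qed
  then show ?thesis by blast
qed

definition cu where "cu N = (SOME c. \<forall>A\<in>RV N. \<forall>B\<in>RV N. \<gamma> N (unif N) A B = c * Cov N (unif N) A B)"

lemma cu:
  assumes "2 \<le> N" "A \<in> RV N" "B \<in> RV N"
  shows "\<gamma> N (unif N) A B = cu N * Cov N (unif N) A B"
  using someI_ex[OF unif_form[OF assms(1)]] assms(2,3) unfolding cu_def by blast


lemma rational:
  assumes n: "2 \<le> n" and k: "\<forall>i\<in>Omega n. 1 \<le> k i" and A: "A \<in> RV n" and B: "B \<in> RV n"
  shows "\<gamma> n (restrict (\<lambda>i. real (k i) / real (\<Sum>j\<in>Omega n. k j)) (Omega n)) A B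
       = cu (\<Sum>j\<in>Omega n. k j) * Cov n (restrict (\<lambda>i. real (k i) / real (\<Sum>j\<in>Omega n. k j)) (Omega n)) A B"
proof -
  define N where "N = (\<Sum>j\<in>Omega n. k j)"
  define q where "q = restrict (\<lambda>i. real (k i) / real N) (Omega n)"
  obtain F where Fim: "F ` Omega N \<subseteq> Omega n" and Fc: "\<forall>i\<in>Omega n. card {y\<in>Omega N. F y = i} = k i"
    using fiber_exists[of k n] unfolding N_def by blast
  have "n = (\<Sum>j\<in>Omega n. (1::nat))" by simp
  also have "\<dots> \<le> N" unfolding N_def using k by (intro sum_mono) auto
  finally have nN: "n \<le> N" .
  have sF: "surj_map N n F" unfolding surj_map_def
  proof
    show "Omega n \<subseteq> F ` Omega N"
    proof
      fix i assume i: "i \<in> Omega n"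
      then have "card {y\<in>Omega N. F y = i} \<ge> 1" using Fc k by auto
      then have "{y\<in>Omega N. F y = i} \<noteq> {}" by (intro notI) simp
      then show "i \<in> F ` Omega N" by auto
    qed
  qed (rule Fim)
  have pf: "pushfwd N n F (unif N) = q"
  proof
    fix x show "pushfwd N n F (unif N) x = q x"
    proof (cases "x \<in> Omega n")
      case True
      have "(\<Sum>y\<in>{y\<in>Omega N. F y = x}. unif N y) = (\<Sum>y\<in>{y\<in>Omega N. F y = x}. 1 / real N)"
        by (rule sum.cong) (auto simp: unif_def)
      also have "\<dots> = real (k x) / real N" using Fc True by simp
      finally show ?thesis using True by (simp add: pushfwd_def q_def)
    next
      case False then show ?thesis by (simp add: pushfwd_def q_def)
    qed
  qed
  have N2: "2 \<le> N" using n nN by simp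
  have "\<gamma> n q A B = \<gamma> N (unif N) (pullback N F A) (pullback N F B)"
    unfolding pf[symmetric] using n nN sF A B N2 by (intro i2 unif_Pn) auto
  also have "\<dots> = cu N * Cov N (unif N) (pullback N F A) (pullback N F B)"
    using N2 by (intro cu pb_RV)
  also have "\<dots> = cu N * Cov n q A B"
    unfolding pf[symmetric] Cov_pf[OF Fim] ..
  finally show ?thesis unfolding q_def N_def .
qed

lemma cu_mult:
  assumes N: "2 \<le> N" and M: "2 \<le> M"
  shows "cu N = cu (N * M)"
proof -
  have sN: "(\<Sum>j\<in>Omega N. M) = N * M" by simp
  have q: "restrict (\<lambda>i. real M / real (\<Sum>j\<in>Omega N. M)) (Omega N) = unif N"
    unfolding sN unif_def using M by simp
  have "\<gamma> N (unif N) (ee N 1) (ee N 1) = cu (N * M) * Cov N (unif N) (ee N 1) (ee N 1)"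
    using rational[OF N, of "\<lambda>_. M", OF _ ee_RV ee_RV] M unfolding q sN by (simp add: unif_def)
  moreover have "\<gamma> N (unif N) (ee N 1) (ee N 1) = cu N * Cov N (unif N) (ee N 1) (ee N 1)"
    using N by (intro cu ee_RV)
  ultimately show ?thesis using Cov_ee1[OF N] by simp
qed

lemma cu_const:
  assumes N: "2 \<le> N" and M: "2 \<le> M"
  shows "cu N = cu M"
  using cu_mult[OF N M] cu_mult[OF M N] by (simp add: mult.commute)

end


lemma tendsto_fun_pointwise:
  fixes f :: "nat \<Rightarrow> nat \<Rightarrow> real"
  assumes "\<And>i. ((\<lambda>M. f M i) \<longlongrightarrow> l i) F"
  shows "(f \<longlongrightarrow> l) F"
proof -
  have "limitin (product_topology (\<lambda>i. euclidean) UNIV) f l F"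
    using assms by (simp add: limitin_componentwise)
  then show ?thesis by (simp add: euclidean_product_topology)
qed

lemma ceil_lim:
  fixes x :: real
  assumes "x > 0"
  shows "(\<lambda>M. real (nat \<lceil>x * real (Suc M)\<rceil>) / real (Suc M)) \<longlonglongrightarrow> x"
proof (rule tendsto_sandwich[of "\<lambda>M. x" _ _ "\<lambda>M. x + inverse (real (Suc M))"])
  show "\<forall>\<^sub>F M in sequentially. x \<le> real (nat \<lceil>x * real (Suc M)\<rceil>) / real (Suc M)"
  proof (rule always_eventually, rule allI)
    fix M
    have pos: "0 < x * real (Suc M)" using assms by simp
    then have "real (nat \<lceil>x * real (Suc M)\<rceil>) = real_of_int \<lceil>x * real (Suc M)\<rceil>"
      by simp
    moreover have "x * real (Suc M) \<le> real_of_int \<lceil>x * real (Suc M)\<rceil>" by (rule le_of_int_ceiling)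
    ultimately have "x * real (Suc M) \<le> real (nat \<lceil>x * real (Suc M)\<rceil>)" by simp
    then show "x \<le> real (nat \<lceil>x * real (Suc M)\<rceil>) / real (Suc M)"
      by (simp add: field_simps)
  qed
  show "\<forall>\<^sub>F M in sequentially. real (nat \<lceil>x * real (Suc M)\<rceil>) / real (Suc M) \<le> x + inverse (real (Suc M))"
  proof (rule always_eventually, rule allI)
    fix M
    have pos: "0 < x * real (Suc M)" using assms by simp
    then have "real (nat \<lceil>x * real (Suc M)\<rceil>) = real_of_int \<lceil>x * real (Suc M)\<rceil>"
      by simp
    also have "\<dots> \<le> x * real (Suc M) + 1" by linarith
    finally have h: "real (nat \<lceil>x * real (Suc M)\<rceil>) \<le> x * real (Suc M) + 1" .
    have "real (nat \<lceil>x * real (Suc M)\<rceil>) / real (Suc M) \<le> (x * real (Suc M) + 1) / real (Suc M)"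
      using h by (rule divide_right_mono) simp
    also have "(x * real (Suc M) + 1) / real (Suc M) = x + inverse (real (Suc M))"
      by (simp add: field_simps del: of_nat_Suc)
    finally show "real (nat \<lceil>x * real (Suc M)\<rceil>) / real (Suc M) \<le> x + inverse (real (Suc M))" .
  qed
  show "(\<lambda>M. x) \<longlonglongrightarrow> x" by simp
  have "(\<lambda>M. x + inverse (real (Suc M))) \<longlonglongrightarrow> x + 0"
    by (intro tendsto_add tendsto_const LIMSEQ_inverse_real_of_nat)
  then show "(\<lambda>M. x + inverse (real (Suc M))) \<longlonglongrightarrow> x" by simp
qed

context gm
begin

lemma main_back:
  assumes cont: "\<And>n A B. 2 \<le> n \<Longrightarrow> A \<in> RV n \<Longrightarrow> B \<in> RV n \<Longrightarrow>
                 continuous_on (Pn n) (\<lambda>p. \<gamma> n p A B)"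
    and n: "2 \<le> n" and p: "p \<in> Pn n" and A: "A \<in> RV n" and B: "B \<in> RV n"
  shows "\<gamma> n p A B = cu 2 * Cov n p A B"
proof -
  define k where "k M i = nat \<lceil>p i * real (Suc M)\<rceil>" for M i
  define T where "T M = (\<Sum>j\<in>Omega n. k M j)" for M
  define q where "q M = restrict (\<lambda>i. real (k M i) / real (T M)) (Omega n)" for M
  have ppos: "\<And>i. i \<in> Omega n \<Longrightarrow> 0 < p i" using p by (simp add: Pn_def)
  have psum: "(\<Sum>i\<in>Omega n. p i) = 1" using p by (simp add: Pn_def)
  have kpos: "\<forall>i\<in>Omega n. 1 \<le> k M i" for M
  proof
    fix i assume "i \<in> Omega n"
    then have "0 < p i * real (Suc M)" using ppos by simp
    then show "1 \<le> k M i" unfolding k_def by linarith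
  qed
  have Tge: "n \<le> T M" for M
  proof -
    have "n = (\<Sum>j\<in>Omega n. (1::nat))" by simp
    also have "\<dots> \<le> T M" unfolding T_def using kpos[of M] by (intro sum_mono) auto
    finally show ?thesis .
  qed
  have eqM: "\<gamma> n (q M) A B = cu 2 * Cov n (q M) A B" for M
  proof -
    have "\<gamma> n (q M) A B = cu (T M) * Cov n (q M) A B"
      unfolding q_def T_def by (rule rational[OF n kpos A B])
    moreover have "cu (T M) = cu 2" using Tge[of M] n by (intro cu_const) auto
    ultimately show ?thesis by simp
  qed
  have Tpos: "0 < real (T M)" for M using Tge[of M] n by simp
  have qPn: "q M \<in> Pn n" for M
  proof -
    have "q M \<in> RV n" unfolding q_def by (rule RV_restrict)
    moreover have "\<forall>x\<in>Omega n. 0 < q M x" using kpos[of M] Tpos[of M]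
      by (auto simp: q_def intro!: divide_pos_pos)
    moreover have "(\<Sum>x\<in>Omega n. q M x) = 1"
    proof -
      have "(\<Sum>x\<in>Omega n. q M x) = (\<Sum>x\<in>Omega n. real (k M x) / real (T M))"
        by (rule sum.cong) (auto simp: q_def)
      also have "\<dots> = real (T M) / real (T M)"
        by (simp add: sum_divide_distrib[symmetric] T_def)
      also have "\<dots> = 1" using Tpos[of M] by simp
      finally show ?thesis .
    qed
    ultimately show ?thesis by (simp add: Pn_def)
  qed
  define r where "r M j = real (k M j) / real (Suc M)" for M j
  have rlim: "(\<lambda>M. r M j) \<longlonglongrightarrow> p j" if "j \<in> Omega n" for j
    unfolding r_def k_def using ceil_lim[OF ppos[OF that]] .
  have rsum: "(\<lambda>M. \<Sum>j\<in>Omega n. r M j) \<longlonglongrightarrow> 1"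
    unfolding psum[symmetric] by (intro tendsto_sum rlim)
  have lq: "(\<lambda>M. q M i) \<longlonglongrightarrow> p i" for i
  proof (cases "i \<in> Omega n")
    case True
    have "q M i = r M i / (\<Sum>j\<in>Omega n. r M j)" for M
    proof -
      have "(\<Sum>j\<in>Omega n. r M j) = real (T M) / real (Suc M)"
        by (simp add: r_def T_def sum_divide_distrib[symmetric])
      then show ?thesis using True by (simp add: q_def r_def)
    qed
    moreover have "(\<lambda>M. r M i / (\<Sum>j\<in>Omega n. r M j)) \<longlonglongrightarrow> p i / 1"
      by (intro tendsto_divide rlim rsum True) simp
    ultimately show ?thesis by simp
  next
    case False
    then have "q M i = p i" for M using p by (auto simp: q_def Pn_def RV_def PiE_def extensional_def)
    then show ?thesis by simp
  qed
  have "q \<longlonglongrightarrow> p" by (rule tendsto_fun_pointwise[OF lq])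
  then have l1: "(\<lambda>M. \<gamma> n (q M) A B) \<longlonglongrightarrow> \<gamma> n p A B"
    by (intro continuous_on_tendsto_compose[OF cont[OF n A B] _ p]) (auto simp: qPn)
  have "(\<lambda>M. Cov n (q M) A B) \<longlonglongrightarrow> Cov n p A B"
    unfolding Cov_def expect_def by (intro tendsto_intros lq)
  then have l2: "(\<lambda>M. \<gamma> n (q M) A B) \<longlonglongrightarrow> cu 2 * Cov n p A B"
    unfolding eqM by (intro tendsto_intros)
  show ?thesis using LIMSEQ_unique[OF l1 l2] .
qed

end

theorem mainTheorem9:
  fixes \<gamma> :: "nat \<Rightarrow> (nat \<Rightarrow> real) \<Rightarrow> (nat \<Rightarrow> real) \<Rightarrow> (nat \<Rightarrow> real) \<Rightarrow> real"
  assumes bilin: "\<And>n p. 2 \<le> n \<Longrightarrow> p \<in> Pn n \<Longrightarrow> bilinear_on n (\<gamma> n p)"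
    and cont: "\<And>n A B. 2 \<le> n \<Longrightarrow> A \<in> RV n \<Longrightarrow> B \<in> RV n \<Longrightarrow>
                 continuous_on (Pn n) (\<lambda>p. \<gamma> n p A B)"
  shows "(\<exists>c::real. \<forall>n\<ge>2. \<forall>p\<in>Pn n. \<forall>A\<in>RV n. \<forall>B\<in>RV n.
            \<gamma> n p A B = c * Cov n p A B)
     \<longleftrightarrow>
         ((\<forall>n\<ge>2. \<forall>p\<in>Pn n. \<forall>A\<in>RV n. \<gamma> n p A (one_fun n) = 0) \<and>
          (\<forall>m n F. 2 \<le> m \<and> m \<le> n \<and> surj_map n m F \<longrightarrow>
             (\<forall>p\<in>Pn n. \<forall>A\<in>RV m. \<forall>B\<in>RV m.
                \<gamma> m (pushfwd n m F p) A B = \<gamma> n p (pullback n F A) (pullback n F B))))"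
    (is "?L \<longleftrightarrow> ?R1 \<and> ?R2")
proof
  assume ?L
  then obtain c where c: "\<And>n p A B. 2 \<le> n \<Longrightarrow> p \<in> Pn n \<Longrightarrow> A \<in> RV n \<Longrightarrow> B \<in> RV n \<Longrightarrow>
      \<gamma> n p A B = c * Cov n p A B" by blast
  have ?R1 using c one_RV Cov_one by simp
  moreover have ?R2
  proof (intro allI impI ballI)
    fix m n F p A B
    assume h: "2 \<le> m \<and> m \<le> n \<and> surj_map n m F" and p: "p \<in> Pn n" and A: "A \<in> RV m" and B: "B \<in> RV m"
    have "\<gamma> m (pushfwd n m F p) A B = c * Cov m (pushfwd n m F p) A B"
      using h p A B by (intro c pf_Pn) auto
    also have "\<dots> = c * Cov n p (pullback n F A) (pullback n F B)"
      using h by (simp add: Cov_pf surj_sub)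
    also have "\<dots> = \<gamma> n p (pullback n F A) (pullback n F B)"
      using h p by (intro c[symmetric] pb_RV) auto
    finally show "\<gamma> m (pushfwd n m F p) A B = \<gamma> n p (pullback n F A) (pullback n F B)" .
  qed
  ultimately show "?R1 \<and> ?R2" ..
next
  assume R: "?R1 \<and> ?R2"
  interpret gm \<gamma>
  proof
    show "\<And>n p. 2 \<le> n \<Longrightarrow> p \<in> Pn n \<Longrightarrow> bilinear_on n (\<gamma> n p)" by (rule bilin)
    show "\<And>n p A. 2 \<le> n \<Longrightarrow> p \<in> Pn n \<Longrightarrow> A \<in> RV n \<Longrightarrow> \<gamma> n p A (one_fun n) = 0"
      using R by blast
    show "\<And>m n F p A B. 2 \<le> m \<Longrightarrow> m \<le> n \<Longrightarrow> surj_map n m F \<Longrightarrow> p \<in> Pn n \<Longrightarrow>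
               A \<in> RV m \<Longrightarrow> B \<in> RV m \<Longrightarrow>
               \<gamma> m (pushfwd n m F p) A B = \<gamma> n p (pullback n F A) (pullback n F B)"
      using R by blast
  qed
  show ?L using main_back[OF cont] by blast
qed

end
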